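(* Let $K\subset K^+\subset L$ be CW complexes such that $K^+$ is obtained from $K$ by attaching 1-cells and $L$ is obtained from $K^+$ by attaching 2-cells. Then the map $\pi_2(K^+,K)\to\pi_2(L,K)$ induced by inclusion is surjective if and only if both (a) $\pi_1(K)\to\pi_1(L)$ is injective, and (b) $\pi_2(K^+)\to\pi_2(L)$ is surjective.
   Context: All maps are induced by inclusion, with a basepoint in $K$. *)

theory Defs
  imports "HOL-Analysis.Analysis"
begin

text \<open>The closed n-disc, its interior (open cell) and boundary sphere, inside
  the library's Euclidean n-space (functions nat => real vanishing from index n on).\<close>

definition disc :: "nat \<Rightarrow> (nat \<Rightarrow> real) topology" where
  "disc n = subtopology (Euclidean_space n) {x. (\<Sum>i<n. (x i)\<^sup>2) \<le> 1}"

definition open_disc :: "nat \<Rightarrow> (nat \<Rightarrow> real) set" where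
  "open_disc n = {x \<in> topspace (Euclidean_space n). (\<Sum>i<n. (x i)\<^sup>2) < 1}"

definition disc_boundary :: "nat \<Rightarrow> (nat \<Rightarrow> real) set" where
  "disc_boundary n = {x \<in> topspace (Euclidean_space n). (\<Sum>i<n. (x i)\<^sup>2) = 1}"

text \<open>X is obtained from its closed subspace A by attaching n-cells: X is the pushout
  of A and a disjoint union of n-discs along attaching maps of the boundary spheres.\<close>

definition attached_cells :: "nat \<Rightarrow> 'a topology \<Rightarrow> 'a set \<Rightarrow> bool" where
  "attached_cells n X A \<longleftrightarrow>
     A \<subseteq> topspace X \<and>
     (\<exists>(I :: 'a set set) (\<phi> :: 'a set \<Rightarrow> (nat \<Rightarrow> real) \<Rightarrow> 'a).
        (\<forall>i\<in>I. continuous_map (disc n) X (\<phi> i)) \<and>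
        (\<forall>i\<in>I. \<phi> i ` disc_boundary n \<subseteq> A) \<and>
        (\<forall>i\<in>I. inj_on (\<phi> i) (open_disc n)) \<and>
        (\<forall>i\<in>I. \<phi> i ` open_disc n \<inter> A = {}) \<and>
        (\<forall>i\<in>I. \<forall>j\<in>I. i \<noteq> j \<longrightarrow> \<phi> i ` open_disc n \<inter> \<phi> j ` open_disc n = {}) \<and>
        topspace X = A \<union> (\<Union>i\<in>I. \<phi> i ` open_disc n) \<and>
        (\<forall>U. U \<subseteq> topspace X \<longrightarrow>
           (closedin X U \<longleftrightarrow>
              closedin (subtopology X A) (U \<inter> A) \<and>
              (\<forall>i\<in>I. closedin (disc n) {x \<in> topspace (disc n). \<phi> i x \<in> U}))))"

text \<open>(The index set I is taken to be a set of subsets of the space only to have some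
  index type of sufficient size; each cell can be indexed by its own open cell.)\<close>

definition cw_complex :: "'a topology \<Rightarrow> bool" where
  "cw_complex X \<longleftrightarrow>
     (\<exists>S :: nat \<Rightarrow> 'a set.
        attached_cells 0 (subtopology X (S 0)) {} \<and>
        (\<forall>n. S n \<subseteq> S (Suc n) \<and> attached_cells (Suc n) (subtopology X (S (Suc n))) (S n)) \<and>
        (\<Union>n. S n) = topspace X \<and>
        (\<forall>U. U \<subseteq> topspace X \<longrightarrow>
           (closedin X U \<longleftrightarrow> (\<forall>n. closedin (subtopology X (S n)) (U \<inter> S n)))))"

definition unit_interval :: "real topology" where
  "unit_interval = top_of_set {0..1}"

definition square :: "(real \<times> real) topology" where
  "square = top_of_set ({0..1} \<times> {0..1})"

definition square_bd :: "(real \<times> real) set" where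
  "square_bd = {(s,t). (s,t) \<in> {0..1} \<times> {0..1} \<and> (s = 0 \<or> s = 1 \<or> t = 0 \<or> t = 1)}"

definition square_J :: "(real \<times> real) set" where
  "square_J = {(s,t). (s,t) \<in> {0..1} \<times> {0..1} \<and> (s = 0 \<or> s = 1 \<or> t = 1)}"

definition based_loop :: "'a topology \<Rightarrow> 'a \<Rightarrow> (real \<Rightarrow> 'a) \<Rightarrow> bool" where
  "based_loop Y x0 p \<longleftrightarrow> continuous_map unit_interval Y p \<and> p 0 = x0 \<and> p 1 = x0"

definition based_2sphere :: "'a topology \<Rightarrow> 'a \<Rightarrow> (real \<times> real \<Rightarrow> 'a) \<Rightarrow> bool" where
  "based_2sphere Y x0 f \<longleftrightarrow> continuous_map square Y f \<and> (\<forall>z\<in>square_bd. f z = x0)"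

text \<open>Representatives of pi_2(Y, A, x0): maps (I^2, boundary, J) -> (Y, A, x0).\<close>
definition rel_2disc :: "'a topology \<Rightarrow> 'a set \<Rightarrow> 'a \<Rightarrow> (real \<times> real \<Rightarrow> 'a) \<Rightarrow> bool" where
  "rel_2disc Y A x0 f \<longleftrightarrow>
     continuous_map square Y f \<and> f ` square_bd \<subseteq> A \<and> (\<forall>z\<in>square_J. f z = x0)"

definition pi1_incl_injective :: "'a topology \<Rightarrow> 'a set \<Rightarrow> 'a \<Rightarrow> bool" where
  "pi1_incl_injective X A x0 \<longleftrightarrow>
     (\<forall>p q. based_loop (subtopology X A) x0 p \<and> based_loop (subtopology X A) x0 q \<and>
        homotopic_with (\<lambda>h. h 0 = x0 \<and> h 1 = x0) unit_interval X p q
        \<longrightarrow> homotopic_with (\<lambda>h. h 0 = x0 \<and> h 1 = x0) unit_interval (subtopology X A) p q)"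

definition pi2_incl_surjective :: "'a topology \<Rightarrow> 'a set \<Rightarrow> 'a \<Rightarrow> bool" where
  "pi2_incl_surjective X B x0 \<longleftrightarrow>
     (\<forall>f. based_2sphere X x0 f \<longrightarrow>
        (\<exists>g. based_2sphere (subtopology X B) x0 g \<and>
             homotopic_with (\<lambda>h. \<forall>z\<in>square_bd. h z = x0) square X g f))"

definition rel_pi2_incl_surjective :: "'a topology \<Rightarrow> 'a set \<Rightarrow> 'a set \<Rightarrow> 'a \<Rightarrow> bool" where
  "rel_pi2_incl_surjective X B A x0 \<longleftrightarrow>
     (\<forall>f. rel_2disc X A x0 f \<longrightarrow>
        (\<exists>g. rel_2disc (subtopology X B) A x0 g \<and>
             homotopic_with (\<lambda>h. h ` square_bd \<subseteq> A \<and> (\<forall>z\<in>square_J. h z = x0))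
               square X g f))"

end

theory Submission
  imports Defs
begin

lemma prod_top_eu: "prod_topology (top_of_set S) (top_of_set T) = top_of_set (S \<times> T)"
  unfolding subtopology_Times[symmetric] prod_topology_euclidean by (rule refl)

lemma paste_le:
  fixes p q :: "'b::topological_space \<Rightarrow> real"
  assumes "continuous_on S p" "continuous_on S q"
    and "continuous_map (top_of_set {x\<in>S. p x \<le> q x}) Y f"
    and "continuous_map (top_of_set {x\<in>S. q x \<le> p x}) Y g"
    and "\<And>x. x \<in> S \<Longrightarrow> p x = q x \<Longrightarrow> f x = g x"
  shows "continuous_map (top_of_set S) Y (\<lambda>x. if p x \<le> q x then f x else g x)"
proof (rule continuous_map_cases_le)
  show "continuous_map (top_of_set S) euclideanreal p" "continuous_map (top_of_set S) euclideanreal q"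
    using assms by auto
  have e1: "subtopology (top_of_set S) {x \<in> topspace (top_of_set S). p x \<le> q x} = top_of_set {x\<in>S. p x \<le> q x}"
    by (simp add: subtopology_subtopology Int_def conj_commute)
  have e2: "subtopology (top_of_set S) {x \<in> topspace (top_of_set S). q x \<le> p x} = top_of_set {x\<in>S. q x \<le> p x}"
    by (simp add: subtopology_subtopology Int_def conj_commute)
  show "continuous_map (subtopology (top_of_set S) {x \<in> topspace (top_of_set S). p x \<le> q x}) Y f"
    using assms e1 by simp
  show "continuous_map (subtopology (top_of_set S) {x \<in> topspace (top_of_set S). q x \<le> p x}) Y g"
    using assms e2 by simp
  show "\<And>x. x \<in> topspace (top_of_set S) \<Longrightarrow> p x = q x \<Longrightarrow> f x = g x"
    using assms(5) by simp
qed

lemma cm_comp: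
  assumes "continuous_on S g" "g ` S \<subseteq> T" "continuous_map (top_of_set T) X f"
  shows "continuous_map (top_of_set S) X (\<lambda>x. f (g x))"
proof -
  have "continuous_map (top_of_set S) (top_of_set T) g" using assms by (simp add: image_subset_iff_funcset)
  from continuous_map_compose[OF this assms(3)] show ?thesis by (simp add: o_def)
qed

lemma conv01: "0 \<le> (a::real) \<Longrightarrow> a \<le> 1 \<Longrightarrow> 0 \<le> b \<Longrightarrow> b \<le> 1 \<Longrightarrow> 0 \<le> t \<Longrightarrow> t \<le> 1
  \<Longrightarrow> 0 \<le> (1-t)*a + t*b \<and> (1-t)*a + t*b \<le> 1"
proof -
  assume h: "0 \<le> a" "a \<le> 1" "0 \<le> b" "b \<le> 1" "0 \<le> t" "t \<le> 1"
  have 1: "(1-t)*a \<le> (1-t)*1" using h by (intro mult_left_mono) auto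
  have 2: "t*b \<le> t*1" using h by (intro mult_left_mono) auto
  have 3: "0 \<le> (1-t)*a" using h by simp
  have 4: "0 \<le> t*b" using h by simp
  have "(1-t)*a + t*b \<le> (1-t)*1 + t*1" by (rule add_mono[OF 1 2])
  then have 5: "(1-t)*a + t*b \<le> 1" by simp
  have "0 \<le> (1-t)*a + t*b" by (rule add_nonneg_nonneg[OF 3 4])
  with 5 show ?thesis by blast
qed

lemma hw_intro:
  assumes "continuous_map (top_of_set ({0..1::real} \<times> S)) Y h"
    and "\<And>x. x \<in> S \<Longrightarrow> h(0,x) = p x"
    and "\<And>x. x \<in> S \<Longrightarrow> h(1,x) = q x"
    and "\<And>t. t \<in> {0..1} \<Longrightarrow> P (\<lambda>x. h(t,x))"
    and "\<And>h k. (\<And>x. x \<in> S \<Longrightarrow> h x = k x) \<Longrightarrow> (P h \<longleftrightarrow> P k)"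
  shows "homotopic_with P (top_of_set S) Y p q"
proof -
  have loc: "\<And>h k. (\<And>x. x \<in> topspace (top_of_set S) \<Longrightarrow> h x = k x) \<Longrightarrow> (P h \<longleftrightarrow> P k)"
    by (rule assms(5)) simp
  have c: "continuous_map (prod_topology (top_of_set {0..1::real}) (top_of_set S)) Y h"
    using assms(1) by (simp only: prod_top_eu)
  show ?thesis
    apply (subst homotopic_with[OF loc])
     apply assumption
    apply (rule exI[of _ h])
    using c assms(2-4) by auto
qed

definition vglue :: "(real\<times>real \<Rightarrow> 'a) \<Rightarrow> (real\<times>real \<Rightarrow> 'a) \<Rightarrow> real\<times>real \<Rightarrow> 'a" where
  "vglue f H = (\<lambda>z. if snd z \<le> 1/2 then H (fst z, 1 - 2 * snd z) else f (fst z, 2 * snd z - 1))"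

definition ghtpy :: "(real\<times>real \<Rightarrow> 'a) \<Rightarrow> (real\<times>real \<Rightarrow> 'a) \<Rightarrow> real\<times>(real\<times>real) \<Rightarrow> 'a" where
  "ghtpy f H = (\<lambda>w. if snd (snd w) \<le> fst w / 2 then H (fst (snd w), fst w - 2 * snd (snd w))
       else f (fst (snd w), (snd (snd w) - fst w / 2) / (1 - fst w / 2)))"

lemma div01: "0 \<le> (u::real) \<Longrightarrow> u \<le> 1 \<Longrightarrow> u/2 \<le> t \<Longrightarrow> t \<le> 1 \<Longrightarrow>
   0 \<le> (t - u/2)/(1-u/2) \<and> (t - u/2)/(1-u/2) \<le> 1"
  by (auto simp: divide_simps)

lemma vglue_cont:
  assumes f: "continuous_map square X f" and H: "continuous_map square X H"
    and eq: "\<And>s. s \<in> {0..1} \<Longrightarrow> H (s,0) = f (s,0)"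
  shows "continuous_map square X (vglue f H)"
  unfolding square_def vglue_def
proof (rule paste_le)
  show "continuous_on ({0..1} \<times> {0..1}) snd" "continuous_on ({0..1::real} \<times> {0..1::real}) (\<lambda>x. 1/2::real)"
    by (intro continuous_intros)+
  show "continuous_map (top_of_set {x \<in> {0..1} \<times> {0..1}. snd x \<le> 1 / 2}) X (\<lambda>z. H (fst z, 1 - 2 * snd z))"
    by (rule cm_comp[OF _ _ H[unfolded square_def]]) (auto intro!: continuous_intros)
  show "continuous_map (top_of_set {x \<in> {0..1} \<times> {0..1}. 1 / 2 \<le> snd x}) X (\<lambda>z. f (fst z, 2 * snd z - 1))"
    by (rule cm_comp[OF _ _ f[unfolded square_def]]) (auto intro!: continuous_intros)
  fix z :: "real \<times> real"
  assume z: "z \<in> {0..1} \<times> {0..1}" "snd z = 1 / 2"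
  have a: "1 - 2 * snd z = 0" and b: "2 * snd z - 1 = 0" using z by simp_all
  have "H (fst z, 1 - 2 * snd z) = H (fst z, 0)" by (simp only: a)
  also have "\<dots> = f (fst z, 0)" using eq z by (auto simp: mem_Times_iff)
  also have "\<dots> = f (fst z, 2 * snd z - 1)" by (simp only: b)
  finally show "H (fst z, 1 - 2 * snd z) = f (fst z, 2 * snd z - 1)" .
qed

lemma ghtpy_cont:
  assumes f: "continuous_map square X f" and H: "continuous_map square X H"
    and eq: "\<And>s. s \<in> {0..1} \<Longrightarrow> H (s,0) = f (s,0)"
  shows "continuous_map (top_of_set ({0..1} \<times> ({0..1} \<times> {0..1}))) X (ghtpy f H)"
  unfolding ghtpy_def
proof (rule paste_le)
  show "continuous_on ({0..1::real} \<times> ({0..1::real} \<times> {0..1::real})) (\<lambda>w. snd (snd w))"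
    by (intro continuous_intros)
  show "continuous_on ({0..1::real} \<times> ({0..1::real} \<times> {0..1::real})) (\<lambda>w. fst w / 2)"
    by (intro continuous_intros) auto
  show "continuous_map (top_of_set {w \<in> {0..1} \<times> ({0..1} \<times> {0..1}). snd (snd w) \<le> fst w / 2}) X
          (\<lambda>w. H (fst (snd w), fst w - 2 * snd (snd w)))"
    by (rule cm_comp[OF _ _ H[unfolded square_def]]) (auto intro!: continuous_intros)
  have "continuous_on {w \<in> {0..1::real} \<times> ({0..1::real} \<times> {0..1::real}). fst w / 2 \<le> snd (snd w)}
          (\<lambda>w. (fst (snd w), (snd (snd w) - fst w / 2) / (1 - fst w / 2)))"
    by (intro continuous_intros) auto
  moreover have "(\<lambda>w. (fst (snd w), (snd (snd w) - fst w / 2) / (1 - fst w / 2))) `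
      {w \<in> {0..1::real} \<times> ({0..1::real} \<times> {0..1::real}). fst w / 2 \<le> snd (snd w)} \<subseteq> {0..1} \<times> {0..1}"
  proof (rule image_subsetI)
    fix w :: "real \<times> real \<times> real"
    assume w: "w \<in> {w \<in> {0..1::real} \<times> ({0..1::real} \<times> {0..1::real}). fst w / 2 \<le> snd (snd w)}"
    obtain u s t where wd: "w = (u,s,t)" by (cases w) auto
    have "u \<in> {0..1}" "s \<in> {0..1}" "t \<in> {0..1}" "u/2 \<le> t" using w wd by auto
    then show "(fst (snd w), (snd (snd w) - fst w / 2) / (1 - fst w / 2)) \<in> {0..1} \<times> {0..1}"
      using div01[of u t] wd by auto
  qed
  ultimately show "continuous_map (top_of_set {w \<in> {0..1} \<times> ({0..1} \<times> {0..1}). fst w / 2 \<le> snd (snd w)}) X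
          (\<lambda>w. f (fst (snd w), (snd (snd w) - fst w / 2) / (1 - fst w / 2)))"
    by (rule cm_comp[OF _ _ f[unfolded square_def]])
  fix w :: "real \<times> real \<times> real"
  assume w: "w \<in> {0..1} \<times> ({0..1} \<times> {0..1})" "snd (snd w) = fst w / 2"
  have a: "fst w - 2 * snd (snd w) = 0" and b: "(snd (snd w) - fst w / 2) / (1 - fst w / 2) = 0"
    using w by simp_all
  have "H (fst (snd w), fst w - 2 * snd (snd w)) = H (fst (snd w), 0)" by (simp only: a)
  also have "\<dots> = f (fst (snd w), 0)" using eq w by (auto simp: mem_Times_iff)
  also have "\<dots> = f (fst (snd w), (snd (snd w) - fst w / 2) / (1 - fst w / 2))" by (simp only: b)
  finally show "H (fst (snd w), fst w - 2 * snd (snd w)) = f (fst (snd w), (snd (snd w) - fst w / 2) / (1 - fst w / 2))" .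
qed

definition Prel :: "'a set \<Rightarrow> 'a \<Rightarrow> (real\<times>real \<Rightarrow> 'a) \<Rightarrow> bool" where
  "Prel A x0 h \<longleftrightarrow> h ` square_bd \<subseteq> A \<and> (\<forall>z\<in>square_J. h z = x0)"

lemma bd_sub: "square_bd \<subseteq> {0..1}\<times>{0..1}" and J_sub: "square_J \<subseteq> {0..1}\<times>{0..1}"
  and J_bd: "square_J \<subseteq> square_bd"
  unfolding square_bd_def square_J_def by auto

lemma Prel_local:
  assumes "\<And>x. x \<in> {0..1} \<times> {0..1} \<Longrightarrow> h x = k x"
  shows "Prel A x0 h \<longleftrightarrow> Prel A x0 k"
proof -
  have "h ` square_bd = k ` square_bd" using bd_sub assms by (intro image_cong) auto
  moreover have hk: "\<And>z. z \<in> square_J \<Longrightarrow> h z = k z" using J_sub assms by blast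
  then have "(\<forall>z\<in>square_J. h z = x0) \<longleftrightarrow> (\<forall>z\<in>square_J. k z = x0)" by auto
  ultimately show ?thesis unfolding Prel_def by simp
qed

lemma glue_homotopic:
  assumes f: "continuous_map square X f" and H: "continuous_map square X H"
    and eq: "\<And>s. s \<in> {0..1} \<Longrightarrow> H (s,0) = f (s,0)"
    and fJ: "\<And>z. z \<in> square_J \<Longrightarrow> f z = x0"
    and HA: "\<And>s t. s \<in> {0..1} \<Longrightarrow> t \<in> {0..1} \<Longrightarrow> H (s,t) \<in> A"
    and Hs: "\<And>t. t \<in> {0..1} \<Longrightarrow> H (0,t) = x0 \<and> H (1,t) = x0"
    and x0A: "x0 \<in> A"
  shows "homotopic_with (Prel A x0) square X f (vglue f H)"
  unfolding square_def
proof (rule hw_intro[where h="ghtpy f H"])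
  show "continuous_map (top_of_set ({0..1} \<times> ({0..1} \<times> {0..1}))) X (ghtpy f H)"
    by (rule ghtpy_cont[OF f H eq])
  show "ghtpy f H (0, x) = f x" if "x \<in> {0..1} \<times> {0..1}" for x
  proof -
    obtain s t where x0: "x = (s,t)" by (cases x)
    then have x: "x = (s,t)" "s \<in> {0..1}" "t \<in> {0..1}" using that by auto
    show ?thesis
    proof (cases "t = 0")
      case True
      then show ?thesis using x eq by (simp add: ghtpy_def)
    next
      case False
      then show ?thesis using x by (simp add: ghtpy_def)
    qed
  qed
  show "ghtpy f H (1, x) = vglue f H x" if "x \<in> {0..1} \<times> {0..1}" for x
  proof -
    obtain s t where x: "x = (s,t)" by (cases x) auto
    have "(t - 1/2) / (1 - 1/2) = 2 * t - (1::real)" by (simp add: field_simps)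
    then show ?thesis using x by (simp add: ghtpy_def vglue_def mult.commute)
  qed
  show "\<And>h k. (\<And>x. x \<in> {0..1} \<times> {0..1} \<Longrightarrow> h x = k x) \<Longrightarrow> Prel A x0 h = Prel A x0 k"
    by (rule Prel_local)
  fix u :: real assume u: "u \<in> {0..1}"
  have J: "ghtpy f H (u, z) = x0" if "z \<in> square_J" for z
  proof -
    obtain s t where z0: "z = (s,t)" by (cases z)
    then have z: "z = (s,t)" "s \<in> {0..1}" "t \<in> {0..1}" "s = 0 \<or> s = 1 \<or> t = 1"
      using that unfolding square_J_def by auto
    show ?thesis
    proof (cases "t \<le> u/2")
      case True
      then have s01: "s = 0 \<or> s = 1" using z u by auto
      have v: "ghtpy f H (u, z) = H (s, u - 2*t)" using True z by (simp add: ghtpy_def)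
      have "u - 2*t \<in> {0..1}" using True z u by auto
      then show ?thesis using v s01 Hs by auto
    next
      case False
      have v: "ghtpy f H (u, z) = f (s, (t - u/2)/(1-u/2))" using False z by (simp add: ghtpy_def)
      have r: "(t - u/2)/(1-u/2) \<in> {0..1}" using div01[of u t] False z u by auto
      have "t = 1 \<Longrightarrow> (t - u/2)/(1-u/2) = 1" using u by auto
      then have "(s, (t - u/2)/(1-u/2)) \<in> square_J" using z r unfolding square_J_def by auto
      then show ?thesis using v fJ by simp
    qed
  qed
  have B: "ghtpy f H (u, z) \<in> A" if "z \<in> square_bd" for z
  proof -
    obtain s t where z0: "z = (s,t)" by (cases z)
    then have z: "z = (s,t)" "s \<in> {0..1}" "t \<in> {0..1}" "s = 0 \<or> s = 1 \<or> t = 0 \<or> t = 1"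
      using that unfolding square_bd_def by auto
    show ?thesis
    proof (cases "t = 0")
      case True
      have v: "ghtpy f H (u, z) = H (s, u)" using True z u by (simp add: ghtpy_def)
      then show ?thesis using HA z u by simp
    next
      case False
      then have "z \<in> square_J" using z unfolding square_J_def by auto
      then show ?thesis using J x0A by simp
    qed
  qed
  show "Prel A x0 (\<lambda>x. ghtpy f H (u, x))"
    unfolding Prel_def using J B by auto
qed

lemma ts_disc: "topspace (disc n) = {x. (\<forall>i\<ge>n. x i = 0) \<and> (\<Sum>i<n. (x i)\<^sup>2) \<le> 1}"
  by (auto simp: disc_def topspace_Euclidean_space)

lemma disc_pcs: "path_connected_space (disc n)"
proof -
  have pc0: "path_component_of (disc n) x (\<lambda>i. 0)" if x: "x \<in> topspace (disc n)" for x
    unfolding path_component_of_def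
  proof (intro exI conjI)
    let ?g = "\<lambda>t i. (1-t) * x i"
    have xs: "\<forall>i\<ge>n. x i = 0" "(\<Sum>i<n. (x i)\<^sup>2) \<le> 1" using x by (auto simp: ts_disc)
    have img: "?g t \<in> {x. (\<forall>i\<ge>n. x i = 0) \<and> (\<Sum>i<n. (x i)\<^sup>2) \<le> 1}" if t: "t \<in> {0..1}" for t
    proof -
      have "(\<Sum>i<n. ((1-t) * x i)\<^sup>2) = (1-t)\<^sup>2 * (\<Sum>i<n. (x i)\<^sup>2)"
        by (simp add: power_mult_distrib sum_distrib_left)
      also have "\<dots> \<le> 1"
      proof (rule mult_le_one)
        show "(1-t)\<^sup>2 \<le> 1" using t by (simp add: abs_square_le_1)
      qed (use xs in \<open>auto intro: sum_nonneg\<close>)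
      finally show ?thesis using xs by auto
    qed
    have "continuous_map (top_of_set {0..1}) (powertop_real UNIV) ?g"
      unfolding continuous_map_componentwise_UNIV by (auto intro!: continuous_intros)
    then show "pathin (disc n) ?g"
      unfolding pathin_def disc_def Euclidean_space_def continuous_map_in_subtopology
      using img by auto
    show "?g 0 = x" by simp
    show "?g 1 = (\<lambda>i. 0)" by simp
  qed
  show ?thesis
    unfolding path_connected_space_iff_path_component
    using pc0 path_component_of_sym path_component_of_trans by metis
qed

lemma attached_cellsD:
  fixes X :: "'a topology"
  assumes "attached_cells n X A"
  obtains I :: "'a set set" and \<phi> where "A \<subseteq> topspace X"
    "\<forall>i\<in>I. continuous_map (disc n) X (\<phi> i)"
    "\<forall>i\<in>I. \<phi> i ` disc_boundary n \<subseteq> A"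
    "\<forall>i\<in>I. inj_on (\<phi> i) (open_disc n)"
    "\<forall>i\<in>I. \<phi> i ` open_disc n \<inter> A = {}"
    "\<forall>i\<in>I. \<forall>j\<in>I. i \<noteq> j \<longrightarrow> \<phi> i ` open_disc n \<inter> \<phi> j ` open_disc n = {}"
    "topspace X = A \<union> (\<Union>i\<in>I. \<phi> i ` open_disc n)"
    "\<forall>U. U \<subseteq> topspace X \<longrightarrow>
           (closedin X U \<longleftrightarrow>
              closedin (subtopology X A) (U \<inter> A) \<and>
              (\<forall>i\<in>I. closedin (disc n) {x \<in> topspace (disc n). \<phi> i x \<in> U}))"
proof -
  show thesis using assms unfolding attached_cells_def
    apply (elim conjE exE)
    apply (rule that)
    apply assumption+
    done
qed

lemma cw_complexD:
  fixes X :: "'a topology"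
  assumes "cw_complex X"
  obtains S :: "nat \<Rightarrow> 'a set" where
    "attached_cells 0 (subtopology X (S 0)) {}"
    "\<forall>n. S n \<subseteq> S (Suc n) \<and> attached_cells (Suc n) (subtopology X (S (Suc n))) (S n)"
    "(\<Union>n. S n) = topspace X"
    "\<forall>U. U \<subseteq> topspace X \<longrightarrow>
           (closedin X U \<longleftrightarrow> (\<forall>n. closedin (subtopology X (S n)) (U \<inter> S n)))"
proof -
  show thesis using assms unfolding cw_complex_def
    apply (elim conjE exE)
    apply (rule that)
    apply assumption+
    done
qed

lemma attached_closed:
  assumes att: "attached_cells n Y A"
    and DA: "closedin (subtopology Y A) (D \<inter> A)"
    and Dpc: "\<And>T. path_connectedin Y T \<Longrightarrow> T \<subseteq> D \<or> T \<inter> D = {}"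
  shows "closedin Y (D \<inter> topspace Y)"
proof -
  obtain I :: "'a set set" and \<phi> where
    A: "A \<subseteq> topspace Y" and
    c: "\<forall>i\<in>I. continuous_map (disc n) Y (\<phi> i)" and
    w: "\<forall>U. U \<subseteq> topspace Y \<longrightarrow>
           (closedin Y U \<longleftrightarrow>
              closedin (subtopology Y A) (U \<inter> A) \<and>
              (\<forall>i\<in>I. closedin (disc n) {x \<in> topspace (disc n). \<phi> i x \<in> U}))"
    by (rule attached_cellsD[OF att])
  have 1: "(D \<inter> topspace Y) \<inter> A = D \<inter> A" using A by auto
  have 2: "closedin (disc n) {x \<in> topspace (disc n). \<phi> i x \<in> D \<inter> topspace Y}" if i: "i \<in> I" for i
  proof -
    have ci: "continuous_map (disc n) Y (\<phi> i)" using c i by blast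
    have "path_connectedin (disc n) (topspace (disc n))"
      using disc_pcs path_connectedin_topspace by blast
    then have "path_connectedin Y (\<phi> i ` topspace (disc n))"
      using path_connectedin_continuous_map_image[OF ci] by blast
    then have disj: "\<phi> i ` topspace (disc n) \<subseteq> D \<or> \<phi> i ` topspace (disc n) \<inter> D = {}" by (rule Dpc)
    have sub: "\<phi> i ` topspace (disc n) \<subseteq> topspace Y"
      using ci continuous_map_image_subset_topspace by blast
    show ?thesis
    proof (cases "\<phi> i ` topspace (disc n) \<subseteq> D")
      case True
      then have e: "{x \<in> topspace (disc n). \<phi> i x \<in> D \<inter> topspace Y} = topspace (disc n)"
        using sub by (auto simp: image_subset_iff)
      show ?thesis unfolding e by (rule closedin_topspace)
    next
      case False
      then have "\<phi> i ` topspace (disc n) \<inter> D = {}" using disj by simp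
      then have e: "{x \<in> topspace (disc n). \<phi> i x \<in> D \<inter> topspace Y} = {}"
        by (auto simp: disjoint_iff)
      show ?thesis unfolding e by (rule closedin_empty)
    qed
  qed
  have "closedin (subtopology Y A) ((D \<inter> topspace Y) \<inter> A)" using DA 1 by simp
  then show ?thesis using w[rule_format, of "D \<inter> topspace Y"] 2 by blast
qed

lemma cw_closed_union:
  assumes cw: "cw_complex X" and DX: "D \<subseteq> topspace X"
    and Dpc: "\<And>T. path_connectedin X T \<Longrightarrow> T \<subseteq> D \<or> T \<inter> D = {}"
  shows "closedin X D"
proof -
  obtain S :: "nat \<Rightarrow> 'a set" where
    S0: "attached_cells 0 (subtopology X (S 0)) {}" and
    Sn: "\<forall>n. S n \<subseteq> S (Suc n) \<and> attached_cells (Suc n) (subtopology X (S (Suc n))) (S n)" and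
    SU: "(\<Union>n. S n) = topspace X" and
    w: "\<forall>U. U \<subseteq> topspace X \<longrightarrow>
           (closedin X U \<longleftrightarrow> (\<forall>n. closedin (subtopology X (S n)) (U \<inter> S n)))"
    by (rule cw_complexD[OF cw])
  have Sts: "S n \<subseteq> topspace X" for n using SU by blast
  have pcsub: "T \<subseteq> D \<or> T \<inter> D = {}" if "path_connectedin (subtopology X Z) T" for Z T
    using that Dpc path_connectedin_subtopology by blast
  have "closedin (subtopology X (S n)) (D \<inter> S n)" for n
  proof (induction n)
    case 0
    have "closedin (subtopology X (S 0)) (D \<inter> topspace (subtopology X (S 0)))"
    proof (rule attached_closed[OF S0])
      show "closedin (subtopology (subtopology X (S 0)) {}) (D \<inter> {})" by simp
      fix T assume "path_connectedin (subtopology X (S 0)) T"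
      then show "T \<subseteq> D \<or> T \<inter> D = {}" by (rule pcsub)
    qed
    moreover have "D \<inter> topspace (subtopology X (S 0)) = D \<inter> S 0" using Sts[of 0] by auto
    ultimately show ?case by simp
  next
    case (Suc n)
    have sub: "S n \<subseteq> S (Suc n)" using Sn by blast
    have e: "subtopology (subtopology X (S (Suc n))) (S n) = subtopology X (S n)"
      using sub by (simp add: subtopology_subtopology Int_absorb1)
    have "closedin (subtopology X (S (Suc n))) (D \<inter> topspace (subtopology X (S (Suc n))))"
    proof (rule attached_closed[of "Suc n" _ "S n"])
      show "attached_cells (Suc n) (subtopology X (S (Suc n))) (S n)" using Sn by blast
      show "closedin (subtopology (subtopology X (S (Suc n))) (S n)) (D \<inter> S n)"
        unfolding e by (rule Suc.IH)
      fix T assume "path_connectedin (subtopology X (S (Suc n))) T"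
      then show "T \<subseteq> D \<or> T \<inter> D = {}" by (rule pcsub)
    qed
    moreover have "D \<inter> topspace (subtopology X (S (Suc n))) = D \<inter> S (Suc n)" using Sts[of "Suc n"] by auto
    ultimately show ?case by simp
  qed
  then show ?thesis using w DX by blast
qed

lemma cw_pc_clopen:
  assumes cw: "cw_complex X"
  shows "closedin X (path_component_of_set X x) \<and> openin X (path_component_of_set X x)"
proof -
  let ?C = "path_component_of_set X x"
  have Csub: "?C \<subseteq> topspace X" by (rule path_component_of_subset_topspace)
  have key: "T \<subseteq> ?C" if T: "path_connectedin X T" "T \<inter> ?C \<noteq> {}" for T
  proof -
    obtain y where y: "y \<in> T" "y \<in> ?C" using T by blast
    have "T \<subseteq> path_component_of_set X y" by (rule path_component_of_maximal[OF T(1) y(1)])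
    moreover have "path_component_of X x = path_component_of X y"
      using y(2) path_component_of_equiv by (metis mem_Collect_eq)
    ultimately show ?thesis by simp
  qed
  have c1: "closedin X ?C"
    by (rule cw_closed_union[OF cw Csub]) (use key in blast)
  have c2: "closedin X (topspace X - ?C)"
  proof (rule cw_closed_union[OF cw])
    fix T assume T: "path_connectedin X T"
    then have "T \<subseteq> topspace X" by (simp add: path_connectedin_def)
    then show "T \<subseteq> topspace X - ?C \<or> T \<inter> (topspace X - ?C) = {}" using key[OF T] by blast
  qed (rule Diff_subset)
  show ?thesis using c1 c2 Csub by (simp add: openin_closedin_eq)
qed

lemma ts_disc1: "topspace (disc 1) = {x. (\<forall>i\<ge>1. x i = 0) \<and> (x 0)\<^sup>2 \<le> 1}"
  by (simp add: ts_disc lessThan_Suc)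

lemma open_disc1: "open_disc 1 = {x. (\<forall>i\<ge>1. x i = 0) \<and> (x 0)\<^sup>2 < 1}"
  by (simp add: open_disc_def topspace_Euclidean_space lessThan_Suc)

lemma disc_boundary1: "disc_boundary 1 = {x. (\<forall>i\<ge>1. x i = 0) \<and> (x 0)\<^sup>2 = 1}"
  by (simp add: disc_boundary_def topspace_Euclidean_space lessThan_Suc)

definition hp :: "real \<Rightarrow> real" where "hp t = (t + 1) / 2"

lemma hp_cont: "continuous_map (disc 1) (top_of_set {0..1}) (\<lambda>x. hp (x 0))"
proof -
  have p: "continuous_map (disc 1) euclideanreal (\<lambda>x. x 0)"
    unfolding disc_def Euclidean_space_def
    by (intro continuous_map_from_subtopology continuous_map_product_projection) simp
  have "continuous_map euclideanreal euclideanreal hp"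
    unfolding continuous_map_iff_continuous2 hp_def by (intro continuous_intros) auto
  from continuous_map_compose[OF p this] have c: "continuous_map (disc 1) euclideanreal (\<lambda>x. hp (x 0))"
    by (simp add: o_def)
  have "hp (x 0) \<in> {0..1}" if "x \<in> topspace (disc 1)" for x
  proof -
    have "(x 0)\<^sup>2 \<le> 1" using that unfolding ts_disc1 by simp
    then have "\<bar>x 0\<bar> \<le> 1" by (simp add: abs_square_le_1)
    then show ?thesis by (auto simp: hp_def)
  qed
  then show ?thesis using c by (auto simp: continuous_map_in_subtopology)
qed

lemma open_disc_sub: "open_disc 1 \<subseteq> topspace (disc 1)"
  unfolding open_disc1 ts_disc1 by auto

lemma retract_1cells:
  fixes L :: "'a topology"
  assumes att: "attached_cells 1 (subtopology L Kp) K" and KKp: "K \<subseteq> Kp" and KpL: "Kp \<subseteq> topspace L"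
    and Cc: "closedin (subtopology L K) C" and Co: "openin (subtopology L K) C"
    and Cpc: "\<And>a b. a \<in> C \<Longrightarrow> b \<in> C \<Longrightarrow> path_component_of (subtopology L K) a b"
    and x0C: "x0 \<in> C"
  shows "\<exists>r. continuous_map (subtopology L Kp) (subtopology L K) r \<and> (\<forall>x\<in>C. r x = x)"
proof -
  let ?Y = "subtopology L Kp" and ?KK = "subtopology L K"
  obtain I :: "'a set set" and \<phi> where
    A: "K \<subseteq> topspace ?Y" and
    c: "\<forall>i\<in>I. continuous_map (disc 1) ?Y (\<phi> i)" and
    bd: "\<forall>i\<in>I. \<phi> i ` disc_boundary 1 \<subseteq> K" and
    inj: "\<forall>i\<in>I. inj_on (\<phi> i) (open_disc 1)" and
    dA: "\<forall>i\<in>I. \<phi> i ` open_disc 1 \<inter> K = {}" and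
    dij: "\<forall>i\<in>I. \<forall>j\<in>I. i \<noteq> j \<longrightarrow> \<phi> i ` open_disc 1 \<inter> \<phi> j ` open_disc 1 = {}" and
    cov: "topspace ?Y = K \<union> (\<Union>i\<in>I. \<phi> i ` open_disc 1)" and
    w: "\<forall>U. U \<subseteq> topspace ?Y \<longrightarrow>
           (closedin ?Y U \<longleftrightarrow>
              closedin (subtopology ?Y K) (U \<inter> K) \<and>
              (\<forall>i\<in>I. closedin (disc 1) {x \<in> topspace (disc 1). \<phi> i x \<in> U}))"
    by (rule attached_cellsD[OF att])
  have tsK: "topspace ?KK = K" using KKp KpL by auto
  have tsY: "topspace ?Y = Kp" using KpL by auto
  have CK: "C \<subseteq> K" using closedin_subset[OF Cc] tsK by auto
  define \<rho> where "\<rho> y = (if y \<in> C then y else x0)" for y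
  have \<rho>C': "\<rho> y \<in> C" for y using x0C by (simp add: \<rho>_def)
  have \<rho>C: "y \<in> C \<Longrightarrow> \<rho> y = y" for y by (simp add: \<rho>_def)
  have \<rho>cont: "continuous_map ?KK ?KK \<rho>"
    unfolding continuous_map_closedin
  proof (intro conjI allI impI)
    show "\<rho> \<in> topspace ?KK \<rightarrow> topspace ?KK" using \<rho>C' CK tsK by auto
    fix U assume U: "closedin ?KK U"
    have e: "{x \<in> topspace ?KK. \<rho> x \<in> U} = (C \<inter> U) \<union> (if x0 \<in> U then topspace ?KK - C else {})"
      using CK tsK by (auto simp: \<rho>_def)
    have "closedin ?KK (topspace ?KK - C)" by (rule closedin_diff[OF closedin_topspace Co])
    then show "closedin ?KK {x \<in> topspace ?KK. \<rho> x \<in> U}"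
      unfolding e using U Cc by (auto intro: closedin_Un closedin_Int)
  qed
  define e where "e t = (\<lambda>j::nat. if j = 0 then t else (0::real))" for t
  have e_bd: "e t \<in> disc_boundary 1" if "t = 1 \<or> t = -1" for t
    using that unfolding disc_boundary1 by (auto simp: e_def)
  define a where "a i = \<phi> i (e (-1))" for i
  define b where "b i = \<phi> i (e 1)" for i
  have "\<exists>g. pathin ?KK g \<and> g 0 = \<rho> (a i) \<and> g 1 = \<rho> (b i)" for i
    using Cpc[OF \<rho>C' \<rho>C'] unfolding path_component_of_def by blast
  then obtain \<gamma> where \<gamma>: "\<And>i. pathin ?KK (\<gamma> i) \<and> \<gamma> i 0 = \<rho> (a i) \<and> \<gamma> i 1 = \<rho> (b i)" by metis
  define r where "r y = (if y \<in> K then \<rho> y else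
     (let i = (SOME i. i \<in> I \<and> y \<in> \<phi> i ` open_disc 1) in \<gamma> i (hp (inv_into (open_disc 1) (\<phi> i) y 0))))" for y
  have key: "r (\<phi> i x) = \<gamma> i (hp (x 0))" if i: "i \<in> I" and x: "x \<in> topspace (disc 1)" for i x
  proof (cases "x \<in> open_disc 1")
    case True
    have nK: "\<phi> i x \<notin> K" using dA i True by blast
    define j where "j = (SOME j. j \<in> I \<and> \<phi> i x \<in> \<phi> j ` open_disc 1)"
    have "j \<in> I \<and> \<phi> i x \<in> \<phi> j ` open_disc 1" unfolding j_def by (rule someI[of _ i]) (use i True in blast)
    then have ji: "j = i" using dij i True by blast
    have inv: "inv_into (open_disc 1) (\<phi> i) (\<phi> i x) = x" using inj i True by (simp add: inv_into_f_f)
    have "r (\<phi> i x) = \<gamma> j (hp (inv_into (open_disc 1) (\<phi> j) (\<phi> i x) 0))"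
      using nK by (simp add: r_def j_def Let_def)
    then show ?thesis using ji inv by simp
  next
    case False
    have x1: "\<forall>k\<ge>1. x k = 0" "(x 0)\<^sup>2 \<le> 1" using x unfolding ts_disc1 by auto
    have "\<not> (x 0)\<^sup>2 < 1" using False x1 unfolding open_disc1 by auto
    then have "(x 0)\<^sup>2 = 1" using x1 by auto
    then have x0: "x 0 = 1 \<or> x 0 = -1" by (simp add: power2_eq_1_iff)
    have xe: "x = e (x 0)" using x1 by (auto simp: e_def fun_eq_iff)
    have "x \<in> disc_boundary 1" using xe e_bd x0 by metis
    then have inK: "\<phi> i x \<in> K" using bd i by blast
    then have rr: "r (\<phi> i x) = \<rho> (\<phi> i x)" by (simp add: r_def)
    show ?thesis
    proof (cases "x 0 = 1")
      case True
      then have "\<phi> i x = b i" using xe by (simp add: b_def)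
      then show ?thesis using rr \<gamma>[of i] True by (simp add: hp_def)
    next
      case False
      then have "x 0 = -1" using x0 by simp
      then have "\<phi> i x = a i" using xe by (metis a_def)
      then show ?thesis using rr \<gamma>[of i] \<open>x 0 = -1\<close> by (simp add: hp_def)
    qed
  qed
  have gcont: "continuous_map (disc 1) ?KK (\<lambda>x. \<gamma> i (hp (x 0)))" for i
    using continuous_map_compose[OF hp_cont, of ?KK "\<gamma> i"] \<gamma>[of i] by (simp add: pathin_def o_def)
  have rK: "r y \<in> K" if y: "y \<in> Kp" for y
  proof (cases "y \<in> K")
    case True
    then show ?thesis using \<rho>C' CK by (simp add: r_def subset_iff)
  next
    case False
    then obtain i x where ix: "i \<in> I" "x \<in> open_disc 1" "y = \<phi> i x" using y cov tsY by auto
    have xt: "x \<in> topspace (disc 1)" using ix open_disc_sub by blast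
    have "\<gamma> i (hp (x 0)) \<in> topspace ?KK"
      using continuous_map_image_subset_topspace[OF gcont[of i]] xt by blast
    then show ?thesis using key[OF ix(1) xt] ix tsK by simp
  qed
  have rcont: "continuous_map ?Y ?KK r"
    unfolding continuous_map_closedin
  proof (intro conjI allI impI)
    show "r \<in> topspace ?Y \<rightarrow> topspace ?KK" using rK tsY tsK by auto
    fix U assume U: "closedin ?KK U"
    let ?V = "{y \<in> topspace ?Y. r y \<in> U}"
    have subK: "subtopology ?Y K = ?KK" using KKp by (simp add: subtopology_subtopology Int_absorb1)
    have VK: "?V \<inter> K = {y \<in> topspace ?KK. \<rho> y \<in> U}" using tsY tsK KKp by (auto simp: r_def)
    have c1: "closedin (subtopology ?Y K) (?V \<inter> K)"
      unfolding subK VK using \<rho>cont U by (simp add: continuous_map_closedin)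
    have c2: "closedin (disc 1) {x \<in> topspace (disc 1). \<phi> i x \<in> ?V}" if i: "i \<in> I" for i
    proof -
      have ci: "continuous_map (disc 1) ?Y (\<phi> i)" using c i by blast
      have "{x \<in> topspace (disc 1). \<phi> i x \<in> ?V} = {x \<in> topspace (disc 1). \<gamma> i (hp (x 0)) \<in> U}"
        using key[OF i] continuous_map_image_subset_topspace[OF ci] by auto
      then show ?thesis using gcont[of i] U by (simp add: continuous_map_closedin)
    qed
    show "closedin ?Y ?V" using w[rule_format, of ?V] c1 c2 by blast
  qed
  have "\<forall>x\<in>C. r x = x" using CK \<rho>C by (auto simp: r_def)
  then show ?thesis using rcont by blast
qed

lemma pi1_inj_1cells:
  fixes L :: "'a topology"
  assumes cw: "cw_complex (subtopology L K)"
    and att: "attached_cells 1 (subtopology L Kp) K" and KKp: "K \<subseteq> Kp" and KpL: "Kp \<subseteq> topspace L"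
    and x0K: "x0 \<in> K"
    and p: "based_loop (subtopology L K) x0 p" and q: "based_loop (subtopology L K) x0 q"
    and h: "homotopic_with (\<lambda>h. h 0 = x0 \<and> h 1 = x0) unit_interval (subtopology L Kp) p q"
  shows "homotopic_with (\<lambda>h. h 0 = x0 \<and> h 1 = x0) unit_interval (subtopology L K) p q"
proof -
  let ?KK = "subtopology L K"
  let ?C = "path_component_of_set ?KK x0"
  have tsK: "topspace ?KK = K" using KKp KpL by auto
  have cl: "closedin ?KK ?C \<and> openin ?KK ?C" by (rule cw_pc_clopen[OF cw])
  have x0C: "x0 \<in> ?C" using x0K tsK by (simp add: path_component_of_refl)
  have Cpc: "path_component_of ?KK a b" if "a \<in> ?C" "b \<in> ?C" for a b
    using that path_component_of_sym path_component_of_trans by (metis mem_Collect_eq)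
  obtain r where r: "continuous_map (subtopology L Kp) ?KK r" "\<forall>x\<in>?C. r x = x"
    using retract_1cells[OF att KKp KpL conjunct1[OF cl] conjunct2[OF cl] Cpc x0C] by blast
  have hr: "homotopic_with (\<lambda>h. h 0 = x0 \<and> h 1 = x0) unit_interval ?KK (r \<circ> p) (r \<circ> q)"
    by (rule homotopic_with_compose_continuous_map_left[OF h r(1)]) (use r(2) x0C in auto)
  have inC: "f t \<in> ?C" if f: "based_loop ?KK x0 f" and t: "t \<in> {0..1}" for f t
  proof -
    have cf: "continuous_map (top_of_set {0..1}) ?KK f" using f by (simp add: based_loop_def unit_interval_def)
    have "path_connectedin (top_of_set {0..1::real}) {0..1}"
      by (simp add: path_connectedin_topspace[of "top_of_set {0..1::real}", simplified] path_connected_space_euclidean_subtopology convex_imp_path_connected)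
    then have pc: "path_connectedin ?KK (f ` {0..1})" by (rule path_connectedin_continuous_map_image[OF cf])
    have "f 0 = x0" using f by (simp add: based_loop_def)
    then have "x0 \<in> f ` {0..1}" by force
    then have "f ` {0..1} \<subseteq> ?C" by (rule path_component_of_maximal[OF pc])
    then show ?thesis using t by blast
  qed
  show ?thesis
  proof (rule homotopic_with_eq[OF hr])
    show "\<And>x. x \<in> topspace unit_interval \<Longrightarrow> p x = (r \<circ> p) x"
      using inC[OF p] r(2) by (simp add: unit_interval_def)
    show "\<And>x. x \<in> topspace unit_interval \<Longrightarrow> q x = (r \<circ> q) x"
      using inC[OF q] r(2) by (simp add: unit_interval_def)
    show "\<And>h k. (\<And>x. x \<in> topspace unit_interval \<Longrightarrow> h x = k x) \<Longrightarrow>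
           (h 0 = x0 \<and> h 1 = x0) = (k 0 = x0 \<and> k 1 = x0)"
      by (simp add: unit_interval_def)
  qed
qed

lemma Prel_eq: "(\<lambda>h. h ` square_bd \<subseteq> A \<and> (\<forall>z\<in>square_J. h z = x0)) = Prel A x0"
  by (rule ext) (simp add: Prel_def)

lemma Psph_local:
  assumes "\<And>x. x \<in> topspace square \<Longrightarrow> h x = k x"
  shows "(\<forall>z\<in>square_bd. h z = x0) = (\<forall>z\<in>square_bd. k z = x0)"
proof -
  have "\<And>z. z \<in> square_bd \<Longrightarrow> h z = k z" using bd_sub assms by (auto simp: square_def)
  then show ?thesis by auto
qed

lemma Prel_sph: "Prel {x0} x0 h \<Longrightarrow> (\<forall>z\<in>square_bd. h z = x0)"
  unfolding Prel_def by blast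

lemma sph_Prel: "x0 \<in> A \<Longrightarrow> (\<forall>z\<in>square_bd. h z = x0) \<Longrightarrow> Prel A x0 h"
  unfolding Prel_def using J_bd by (auto simp: image_subset_iff)

lemma sq_top: "topspace square = {0..1} \<times> {0..1}"
  by (simp add: square_def)

lemma htpy_sq: "prod_topology (top_of_set {0..1}) square = top_of_set ({0..1::real} \<times> ({0..1::real} \<times> {0..1::real}))"
  by (simp add: square_def prod_top_eu)

lemma htpy_ui: "prod_topology (top_of_set {0..1}) unit_interval = top_of_set ({0..1::real} \<times> {0..1::real})"
  by (simp add: unit_interval_def prod_top_eu)

lemma cont_sub_iff: "continuous_map X (subtopology L S) f \<longleftrightarrow> continuous_map X L f \<and> f ` topspace X \<subseteq> S"
  by (simp add: continuous_map_in_subtopology image_subset_iff_funcset)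

lemma Ploop_local:
  fixes h k :: "real \<Rightarrow> 'a"
  assumes a: "\<And>x. x \<in> {0..1} \<Longrightarrow> h x = k x"
  shows "(h 0 = x0 \<and> h 1 = x0) = (k 0 = x0 \<and> k 1 = x0)"
proof -
  have "h 0 = k 0" "h 1 = k 1" using a by auto
  then show ?thesis by simp
qed

lemma homotopic_withE:
  assumes "homotopic_with P X Y f g"
  obtains h where "continuous_map (prod_topology (top_of_set {0..1::real}) X) Y h"
    "\<And>x. h (0,x) = f x" "\<And>x. h (1,x) = g x" "\<And>t. t \<in> {0..1} \<Longrightarrow> P (\<lambda>x. h (t,x))"
proof -
  obtain h where h: "continuous_map (prod_topology (top_of_set {0..1::real}) X) Y h"
    "\<forall>x. h (0,x) = f x" "\<forall>x. h (1,x) = g x" "\<forall>t\<in>{0..1}. P (\<lambda>x. h (t,x))"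
    using assms unfolding homotopic_with_def by blast
  show thesis by (rule that[OF h(1)]) (use h in auto)
qed

lemma dir_back:
  fixes L :: "'a topology"
  assumes KKp: "K \<subseteq> Kp" and KpL: "Kp \<subseteq> topspace L" and x0K: "x0 \<in> K"
    and a: "pi1_incl_injective L K x0" and b: "pi2_incl_surjective L Kp x0"
  shows "rel_pi2_incl_surjective L Kp K x0"
  unfolding rel_pi2_incl_surjective_def Prel_eq
proof (intro allI impI)
  fix f assume "rel_2disc L K x0 f"
  then have cf: "continuous_map square L f" and fbd: "f ` square_bd \<subseteq> K" and fJ: "\<forall>z\<in>square_J. f z = x0"
    by (auto simp: rel_2disc_def)
  have x0L: "x0 \<in> topspace L" using x0K KKp KpL by auto
  let ?KK = "subtopology L K"
  define \<beta> where "\<beta> s = f (s, 0)" for s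
  have cb: "continuous_map unit_interval L \<beta>"
    unfolding unit_interval_def \<beta>_def
    by (rule cm_comp[OF _ _ cf[unfolded square_def]]) (auto intro!: continuous_intros)
  have bK: "\<beta> s \<in> K" if "s \<in> {0..1}" for s
  proof -
    have "(s,0) \<in> square_bd" using that by (auto simp: square_bd_def)
    then show ?thesis using fbd by (auto simp: \<beta>_def)
  qed
  have b01: "\<beta> 0 = x0" "\<beta> 1 = x0" using fJ by (auto simp: \<beta>_def square_J_def)
  have lb: "based_loop ?KK x0 \<beta>"
    unfolding based_loop_def using cb bK b01 by (auto simp: cont_sub_iff unit_interval_def)
  have lc: "based_loop ?KK x0 (\<lambda>_. x0)"
    unfolding based_loop_def using x0K x0L by (auto simp: cont_sub_iff)
  have hL: "homotopic_with (\<lambda>h. h 0 = x0 \<and> h 1 = x0) unit_interval L \<beta> (\<lambda>_. x0)"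
    unfolding unit_interval_def
  proof (rule hw_intro[where h="\<lambda>w. f (snd w, fst w)"])
    show "continuous_map (top_of_set ({0..1} \<times> {0..1})) L (\<lambda>w. f (snd w, fst w))"
      by (rule cm_comp[OF _ _ cf[unfolded square_def]]) (auto intro!: continuous_intros)
    show "\<And>x. x \<in> {0..1} \<Longrightarrow> f (snd (0, x), fst (0, x)) = \<beta> x" by (simp add: \<beta>_def)
    show "\<And>x. x \<in> {0..1} \<Longrightarrow> f (snd (1, x), fst (1, x)) = x0" using fJ by (auto simp: square_J_def)
    show "\<And>t. t \<in> {0..1} \<Longrightarrow> f (snd (t, 0), fst (t, 0)) = x0 \<and> f (snd (t, 1), fst (t, 1)) = x0"
      using fJ by (auto simp: square_J_def)
    show "\<And>h k. (\<And>x. x \<in> {0..1::real} \<Longrightarrow> h x = k x) \<Longrightarrow> (h 0 = x0 \<and> h 1 = x0) = (k 0 = x0 \<and> k 1 = x0)"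
      by (rule Ploop_local)
  qed
  have "homotopic_with (\<lambda>h. h 0 = x0 \<and> h 1 = x0) unit_interval ?KK \<beta> (\<lambda>_. x0)"
    using a lb lc hL unfolding pi1_incl_injective_def by blast
  then obtain hk where hk: "continuous_map (prod_topology (top_of_set {0..1::real}) unit_interval) ?KK hk"
    "\<And>x. hk (0, x) = \<beta> x" "\<And>x. hk (1, x) = x0" "\<And>t. t \<in> {0..1} \<Longrightarrow> hk (t, 0) = x0 \<and> hk (t, 1) = x0"
    unfolding homotopic_with_def by auto
  define H where "H z = hk (snd z, fst z)" for z :: "real \<times> real"
  have cHK: "continuous_map square ?KK H"
    unfolding square_def H_def
    by (rule cm_comp[OF _ _ hk(1)[unfolded htpy_ui]]) (auto intro!: continuous_intros)
  have cH: "continuous_map square L H" using cHK by (simp add: cont_sub_iff)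
  have HK: "H (s,t) \<in> K" if "s \<in> {0..1}" "t \<in> {0..1}" for s t
    using cHK that by (auto simp: cont_sub_iff sq_top)
  have H0: "H (s,0) = f (s,0)" for s by (simp add: H_def hk(2) \<beta>_def)
  have H1: "H (s,1) = x0" for s by (simp add: H_def hk(3))
  have Hs: "H (0,t) = x0 \<and> H (1,t) = x0" if "t \<in> {0..1}" for t using hk(4)[OF that] by (simp add: H_def)
  have fJ': "\<And>z. z \<in> square_J \<Longrightarrow> f z = x0" using fJ by blast
  have h1: "homotopic_with (Prel K x0) square L f (vglue f H)"
    by (rule glue_homotopic[OF cf cH H0 fJ' HK Hs x0K])
  define f' where "f' = vglue f H"
  have cf': "continuous_map square L f'" unfolding f'_def by (rule vglue_cont[OF cf cH H0])
  have Pf': "Prel K x0 f'" using homotopic_with_imp_property[OF h1] by (simp add: f'_def)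
  have sf': "based_2sphere L x0 f'"
    unfolding based_2sphere_def
  proof (intro conjI ballI cf')
    fix z assume z: "z \<in> square_bd"
    obtain s t where z0: "z = (s,t)" by (cases z)
    then have zz: "s \<in> {0..1}" "t \<in> {0..1}" "s = 0 \<or> s = 1 \<or> t = 0 \<or> t = 1" using z by (auto simp: square_bd_def)
    show "f' z = x0"
    proof (cases "t = 0")
      case True
      then show ?thesis using z0 H1 by (simp add: f'_def vglue_def)
    next
      case False
      then have "z \<in> square_J" using zz z0 by (auto simp: square_J_def)
      then show ?thesis using Pf' by (simp add: Prel_def)
    qed
  qed
  obtain g' where g': "based_2sphere (subtopology L Kp) x0 g'"
      and h2: "homotopic_with (\<lambda>h. \<forall>z\<in>square_bd. h z = x0) square L g' f'"
    using b sf' unfolding pi2_incl_surjective_def by blast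
  have cg'K: "continuous_map square (subtopology L Kp) g'" and g'bd: "\<forall>z\<in>square_bd. g' z = x0"
    using g' by (auto simp: based_2sphere_def)
  have cg': "continuous_map square L g'" using cg'K by (simp add: cont_sub_iff)
  define Hm where "Hm z = H (fst z, 1 - snd z)" for z :: "real \<times> real"
  have cHmK: "continuous_map square ?KK Hm"
    unfolding Hm_def square_def
    by (rule cm_comp[OF _ _ cHK[unfolded square_def]]) (auto intro!: continuous_intros)
  have cHm: "continuous_map square L Hm" using cHmK by (simp add: cont_sub_iff)
  have cHmKp: "continuous_map square (subtopology L Kp) Hm" using cHmK KKp by (auto simp: cont_sub_iff)
  have Hm0: "Hm (s,0) = g' (s,0)" if "s \<in> {0..1}" for s
  proof -
    have "(s,0) \<in> square_bd" using that by (auto simp: square_bd_def)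
    then show ?thesis using g'bd H1 by (simp add: Hm_def)
  qed
  have g'J: "\<And>z. z \<in> square_J \<Longrightarrow> g' z = x0" using g'bd J_bd by blast
  have HmK: "Hm (s,t) \<in> K" if "s \<in> {0..1}" "t \<in> {0..1}" for s t using HK that by (simp add: Hm_def)
  have Hms: "Hm (0,t) = x0 \<and> Hm (1,t) = x0" if "t \<in> {0..1}" for t using Hs that by (simp add: Hm_def)
  have h3: "homotopic_with (Prel K x0) square L g' (vglue g' Hm)"
    by (rule glue_homotopic[OF cg' cHm Hm0 g'J HmK Hms x0K])
  define g where "g = vglue g' Hm"
  have cgKp: "continuous_map square (subtopology L Kp) g"
    unfolding g_def by (rule vglue_cont[OF cg'K cHmKp Hm0])
  have Pg: "Prel K x0 g" using homotopic_with_imp_property[OF h3] by (simp add: g_def)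
  have rg: "rel_2disc (subtopology L Kp) K x0 g"
    using cgKp Pg by (simp add: rel_2disc_def Prel_def)
  have h2': "homotopic_with (Prel K x0) square L g' f'"
  proof (rule homotopic_with_mono[OF h2])
    fix h assume "continuous_map square L h" "\<forall>z\<in>square_bd. h z = x0"
    then show "Prel K x0 h" using sph_Prel[OF x0K] by simp
  qed
  have "homotopic_with (Prel K x0) square L g f"
  proof (rule homotopic_with_trans)
    show "homotopic_with (Prel K x0) square L g g'" using h3 by (simp add: g_def homotopic_with_sym)
    show "homotopic_with (Prel K x0) square L g' f"
    proof (rule homotopic_with_trans[OF h2'])
      show "homotopic_with (Prel K x0) square L f' f" using h1 by (simp add: f'_def homotopic_with_sym)
    qed
  qed
  then show "\<exists>g. rel_2disc (subtopology L Kp) K x0 g \<and> homotopic_with (Prel K x0) square L g f"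
    using rg by blast
qed

definition vv :: "real \<Rightarrow> real \<Rightarrow> real" where "vv u t = (1 - 2 * t) + 2 * t * u"

lemma vv01: "0 \<le> u \<Longrightarrow> u \<le> 1 \<Longrightarrow> 0 \<le> t \<Longrightarrow> t \<le> 1/2 \<Longrightarrow> 0 \<le> vv u t \<and> vv u t \<le> 1"
  using conv01[of 1 u "2*t"] by (simp add: vv_def algebra_simps)

lemma vv_simps: "vv u 0 = 1" "vv u (1/2) = u" "vv 0 t = 1 - 2 * t" "vv 1 t = 1"
  by (simp_all add: vv_def)

lemma vv_cont: "continuous_on S (\<lambda>w. vv (f w) (g w))" if "continuous_on S f" "continuous_on S g"
  unfolding vv_def using that by (intro continuous_intros)

lemma dir_b:
  fixes L :: "'a topology"
  assumes KKp: "K \<subseteq> Kp" and KpL: "Kp \<subseteq> topspace L" and x0K: "x0 \<in> K"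
    and S: "rel_pi2_incl_surjective L Kp K x0"
  shows "pi2_incl_surjective L Kp x0"
  unfolding pi2_incl_surjective_def
proof (intro allI impI)
  fix f assume sf: "based_2sphere L x0 f"
  have cf: "continuous_map square L f" and fbd: "\<forall>z\<in>square_bd. f z = x0"
    using sf by (auto simp: based_2sphere_def)
  have x0L: "x0 \<in> topspace L" using x0K KKp KpL by auto
  have fJ: "\<And>z. z \<in> square_J \<Longrightarrow> f z = x0" using fbd J_bd by blast
  have rf: "rel_2disc L K x0 f"
    using cf fbd fJ x0K by (auto simp: rel_2disc_def)
  obtain g where rg: "rel_2disc (subtopology L Kp) K x0 g" and hgf: "homotopic_with (Prel K x0) square L g f"
    using S rf unfolding rel_pi2_incl_surjective_def Prel_eq by blast
  obtain F where F: "continuous_map (prod_topology (top_of_set {0..1::real}) square) L F"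
    "\<And>x. F (0,x) = g x" "\<And>x. F (1,x) = f x" "\<And>u. u \<in> {0..1} \<Longrightarrow> Prel K x0 (\<lambda>x. F (u,x))"
    using hgf unfolding homotopic_with_def by auto
  have cF: "continuous_map (top_of_set ({0..1} \<times> ({0..1} \<times> {0..1}))) L F" using F(1) htpy_sq by simp
  have FK: "F (u,(s,0)) \<in> K" if "u \<in> {0..1}" "s \<in> {0..1}" for u s
  proof -
    have "(s,0) \<in> square_bd" using that by (auto simp: square_bd_def)
    then show ?thesis using F(4)[OF that(1)] by (auto simp: Prel_def)
  qed
  have FJ: "F (u,z) = x0" if "u \<in> {0..1}" "z \<in> square_J" for u z
    using F(4)[OF that(1)] that(2) by (auto simp: Prel_def)
  have cgK: "continuous_map square (subtopology L Kp) g" using rg by (simp add: rel_2disc_def)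
  define E where "E z = F (snd z, (fst z, 0))" for z :: "real \<times> real"
  have cE: "continuous_map square L E"
    unfolding E_def square_def by (rule cm_comp[OF _ _ cF]) (auto intro!: continuous_intros)
  have cEKp: "continuous_map square (subtopology L Kp) E"
    using cE FK KKp by (auto simp: cont_sub_iff sq_top E_def)
  have E0: "E (s,0) = g (s,0)" if "s \<in> {0..1}" for s by (simp add: E_def F(2))
  define g' where "g' = vglue g E"
  have cg'K: "continuous_map square (subtopology L Kp) g'"
    unfolding g'_def by (rule vglue_cont[OF cgK cEKp E0])
  define G where "G w = (if snd (snd w) \<le> 1/2 then F (vv (fst w) (snd (snd w)), (fst (snd w), 0))
     else F (fst w, (fst (snd w), 2 * snd (snd w) - 1)))" for w :: "real \<times> real \<times> real"
  define c where "c z = x0" for z :: "real \<times> real"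
  have hG: "homotopic_with (\<lambda>h. \<forall>z\<in>square_bd. h z = x0) square L g' (vglue f c)"
    unfolding square_def
  proof (rule hw_intro[where h=G])
    show "continuous_map (top_of_set ({0..1} \<times> ({0..1} \<times> {0..1}))) L G"
      unfolding G_def
    proof (rule paste_le)
      show "continuous_on ({0..1::real} \<times> ({0..1::real} \<times> {0..1::real})) (\<lambda>w. snd (snd w))"
        by (intro continuous_intros)
      show "continuous_on ({0..1::real} \<times> ({0..1::real} \<times> {0..1::real})) (\<lambda>w. 1/2::real)"
        by (intro continuous_intros)
      show "continuous_map (top_of_set {w \<in> {0..1} \<times> ({0..1} \<times> {0..1}). snd (snd w) \<le> 1/2}) L
          (\<lambda>w. F (vv (fst w) (snd (snd w)), (fst (snd w), 0)))"
      proof (rule cm_comp[OF _ _ cF])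
        show "continuous_on {w \<in> {0..1::real} \<times> ({0..1::real} \<times> {0..1::real}). snd (snd w) \<le> 1/2}
            (\<lambda>w. (vv (fst w) (snd (snd w)), (fst (snd w), 0::real)))"
          by (intro continuous_intros vv_cont)
        show "(\<lambda>w. (vv (fst w) (snd (snd w)), (fst (snd w), 0::real))) `
            {w \<in> {0..1::real} \<times> ({0..1::real} \<times> {0..1::real}). snd (snd w) \<le> 1/2} \<subseteq> {0..1} \<times> ({0..1} \<times> {0..1})"
        proof (rule image_subsetI)
          fix w :: "real \<times> real \<times> real"
          assume w: "w \<in> {w \<in> {0..1::real} \<times> ({0..1::real} \<times> {0..1::real}). snd (snd w) \<le> 1/2}"
          obtain u s t where wd: "w = (u,s,t)" by (cases w) auto
          have "u \<in> {0..1}" "s \<in> {0..1}" "t \<in> {0..1}" "t \<le> 1/2" using w wd by auto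
          then show "(vv (fst w) (snd (snd w)), (fst (snd w), 0::real)) \<in> {0..1} \<times> ({0..1} \<times> {0..1})"
            using vv01[of u t] wd by auto
        qed
      qed
      show "continuous_map (top_of_set {w \<in> {0..1} \<times> ({0..1} \<times> {0..1}). 1/2 \<le> snd (snd w)}) L
          (\<lambda>w. F (fst w, (fst (snd w), 2 * snd (snd w) - 1)))"
        by (rule cm_comp[OF _ _ cF]) (auto intro!: continuous_intros)
      fix w :: "real \<times> real \<times> real"
      assume w: "w \<in> {0..1} \<times> ({0..1} \<times> {0..1})" "snd (snd w) = 1/2"
      have a: "vv (fst w) (snd (snd w)) = fst w" unfolding w(2) by (rule vv_simps(2))
      have b: "2 * snd (snd w) - 1 = 0" using w(2) by simp
      show "F (vv (fst w) (snd (snd w)), (fst (snd w), 0)) = F (fst w, (fst (snd w), 2 * snd (snd w) - 1))"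
        by (simp only: a b)
    qed
    show "G (0, x) = g' x" if "x \<in> {0..1} \<times> {0..1}" for x
    proof -
      obtain s t where x: "x = (s,t)" by (cases x)
      show ?thesis using x by (simp add: G_def g'_def vglue_def vv_simps E_def F(2))
    qed
    show "G (1, x) = vglue f c x" if "x \<in> {0..1} \<times> {0..1}" for x
    proof -
      obtain s t where x: "x = (s,t)" by (cases x)
      have "s \<in> {0..1}" using that x by auto
      then have "(s,0) \<in> square_bd" by (auto simp: square_bd_def)
      then have "f (s,0) = x0" using fbd by blast
      then show ?thesis using x by (simp add: G_def vglue_def vv_simps F(3) c_def)
    qed
    show "\<And>h k. (\<And>x. x \<in> {0..1} \<times> {0..1} \<Longrightarrow> h x = k x) \<Longrightarrow>
        (\<forall>z\<in>square_bd. h z = x0) = (\<forall>z\<in>square_bd. k z = x0)"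
      by (rule Psph_local) (simp add: sq_top)
    fix u :: real assume u: "u \<in> {0..1}"
    show "\<forall>z\<in>square_bd. G (u, z) = x0"
    proof
      fix z assume z: "z \<in> square_bd"
      obtain s t where z0: "z = (s,t)" by (cases z)
      then have zz: "s \<in> {0..1}" "t \<in> {0..1}" "s = 0 \<or> s = 1 \<or> t = 0 \<or> t = 1" using z by (auto simp: square_bd_def)
      show "G (u, z) = x0"
      proof (cases "t = 0")
        case True
        have "(s,0) \<in> square_bd" using zz by (auto simp: square_bd_def)
        then have "f (s,0) = x0" using fbd by blast
        then show ?thesis using True z0 by (simp add: G_def vv_simps F(3))
      next
        case False
        show ?thesis
        proof (cases "t \<le> 1/2")
          case True
          then have s01: "s = 0 \<or> s = 1" using zz False by auto
          have v: "vv u t \<in> {0..1}" using vv01[of u t] u zz True by auto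
          have "(s,0) \<in> square_J" using s01 by (auto simp: square_J_def)
          then have "F (vv u t, (s,0)) = x0" using FJ v by blast
          then show ?thesis using True z0 by (simp add: G_def)
        next
          case f2: False
          have "(s, 2*t - 1) \<in> square_J" using zz f2 False by (auto simp: square_J_def)
          then have "F (u, (s, 2*t - 1)) = x0" using FJ u by blast
          then show ?thesis using f2 z0 by (simp add: G_def)
        qed
      qed
    qed
  qed
  have cc: "continuous_map square L c" unfolding c_def using x0L by simp
  have c0: "c (s,0) = f (s,0)" if "s \<in> {0..1}" for s
  proof -
    have "(s,0) \<in> square_bd" using that by (auto simp: square_bd_def)
    then show ?thesis using fbd by (simp add: c_def)
  qed
  have cA: "\<And>s t. s \<in> {0..1} \<Longrightarrow> t \<in> {0..1} \<Longrightarrow> c (s,t) \<in> {x0}" by (simp add: c_def)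
  have cs: "\<And>t. t \<in> {0..1} \<Longrightarrow> c (0,t) = x0 \<and> c (1,t) = x0" by (simp add: c_def)
  have hfc: "homotopic_with (Prel {x0} x0) square L f (vglue f c)"
    by (rule glue_homotopic[OF cf cc c0 fJ cA cs singletonI])
  have hfc': "homotopic_with (\<lambda>h. \<forall>z\<in>square_bd. h z = x0) square L f (vglue f c)"
  proof (rule homotopic_with_mono[OF hfc])
    fix h assume "continuous_map square L h" and ph: "Prel {x0} x0 h"
    show "\<forall>z\<in>square_bd. h z = x0" using ph by (rule Prel_sph)
  qed
  have hh: "homotopic_with (\<lambda>h. \<forall>z\<in>square_bd. h z = x0) square L g' f"
    by (rule homotopic_with_trans[OF hG homotopic_with_symD[OF hfc']])
  have "\<forall>z\<in>square_bd. g' z = x0" using homotopic_with_imp_property[OF hG] by blast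
  then have "based_2sphere (subtopology L Kp) x0 g'" using cg'K by (simp add: based_2sphere_def)
  then show "\<exists>g. based_2sphere (subtopology L Kp) x0 g \<and>
             homotopic_with (\<lambda>h. \<forall>z\<in>square_bd. h z = x0) square L g f"
    using hh by blast
qed

definition cu :: "real \<Rightarrow> real" where "cu s = max 0 (min 1 (3 * s - 1))"
definition cs :: "real \<Rightarrow> real" where "cs s = min 1 (min (3 * s) (3 - 3 * s))"

lemma c1: "0 \<le> s \<Longrightarrow> s \<le> 1/3 \<Longrightarrow> cu s = 0 \<and> cs s = 3 * s"
  by (auto simp: cu_def cs_def)
lemma c2: "1/3 \<le> s \<Longrightarrow> s \<le> 2/3 \<Longrightarrow> cu s = 3 * s - 1 \<and> cs s = 1"
  by (auto simp: cu_def cs_def)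
lemma c3: "2/3 \<le> s \<Longrightarrow> s \<le> 1 \<Longrightarrow> cu s = 1 \<and> cs s = 3 - 3 * s"
  by (auto simp: cu_def cs_def)
lemma c_ends: "cu 0 = 0" "cs 0 = 0" "cu 1 = 1" "cs 1 = 0"
  by (auto simp: cu_def cs_def)
lemma crange: "0 \<le> s \<Longrightarrow> s \<le> 1 \<Longrightarrow> cu s \<in> {0..1} \<and> cs s \<in> {0..1}"
  by (auto simp: cu_def cs_def)
lemma cJ: "0 \<le> s \<Longrightarrow> s \<le> 1 \<Longrightarrow> (cu s, cs s) \<in> square_J"
  using crange[of s] by (auto simp: square_J_def cu_def cs_def)
lemma cu_cont: "continuous_on S f \<Longrightarrow> continuous_on S (\<lambda>w. cu (f w))"
  unfolding cu_def by (intro continuous_intros)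
lemma cs_cont: "continuous_on S f \<Longrightarrow> continuous_on S (\<lambda>w. cs (f w))"
  unfolding cs_def by (intro continuous_intros)

lemma dir_a:
  fixes L :: "'a topology"
  assumes cw: "cw_complex (subtopology L K)"
    and att: "attached_cells 1 (subtopology L Kp) K"
    and KKp: "K \<subseteq> Kp" and KpL: "Kp \<subseteq> topspace L" and x0K: "x0 \<in> K"
    and S: "rel_pi2_incl_surjective L Kp K x0"
  shows "pi1_incl_injective L K x0"
  unfolding pi1_incl_injective_def
proof (intro allI impI, elim conjE)
  let ?KK = "subtopology L K"
  fix p q assume p: "based_loop ?KK x0 p" and q: "based_loop ?KK x0 q"
    and hpq: "homotopic_with (\<lambda>h. h 0 = x0 \<and> h 1 = x0) unit_interval L p q"
  show "homotopic_with (\<lambda>h. h 0 = x0 \<and> h 1 = x0) unit_interval ?KK p q"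
  proof (rule pi1_inj_1cells[OF cw att KKp KpL x0K p q])
    have x0L: "x0 \<in> topspace L" using x0K KKp KpL by auto
    obtain P where P: "continuous_map (prod_topology (top_of_set {0..1::real}) unit_interval) L P"
      "\<And>x. P (0,x) = p x" "\<And>x. P (1,x) = q x" "\<And>u. u \<in> {0..1} \<Longrightarrow> P (u,0) = x0 \<and> P (u,1) = x0"
      using hpq unfolding homotopic_with_def by auto
    have cP: "continuous_map (top_of_set ({0..1} \<times> {0..1})) L P" using P(1) htpy_ui by simp
    have pK: "p t \<in> K" if "t \<in> {0..1}" for t
      using p that by (auto simp: based_loop_def cont_sub_iff unit_interval_def)
    have qK: "q t \<in> K" if "t \<in> {0..1}" for t
      using q that by (auto simp: based_loop_def cont_sub_iff unit_interval_def)
    define f where "f z = P ((1 - snd z) * cu (fst z) + snd z * fst z, (1 - snd z) * cs (fst z))" for z :: "real \<times> real"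
    have cf: "continuous_map square L f"
      unfolding f_def square_def
    proof (rule cm_comp[OF _ _ cP])
      show "continuous_on ({0..1::real} \<times> {0..1::real})
          (\<lambda>z. ((1 - snd z) * cu (fst z) + snd z * fst z, (1 - snd z) * cs (fst z)))"
        by (intro continuous_intros cu_cont cs_cont)
      show "(\<lambda>z. ((1 - snd z) * cu (fst z) + snd z * fst z, (1 - snd z) * cs (fst z))) ` ({0..1} \<times> {0..1})
          \<subseteq> {0..1} \<times> {0..1}"
      proof (rule image_subsetI)
        fix z :: "real \<times> real" assume z: "z \<in> {0..1} \<times> {0..1}"
        obtain s t where zz: "z = (s,t)" by (cases z)
        have st: "0 \<le> s" "s \<le> 1" "0 \<le> t" "t \<le> 1" using z zz by auto
        have r: "cu s \<in> {0..1}" "cs s \<in> {0..1}" using crange[OF st(1,2)] by auto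
        have "0 \<le> (1 - t) * cu s + t * s \<and> (1 - t) * cu s + t * s \<le> 1"
          using conv01[of "cu s" s t] r st by auto
        moreover have "0 \<le> (1 - t) * cs s + t * 0 \<and> (1 - t) * cs s + t * 0 \<le> 1"
          using conv01[of "cs s" 0 t] r st by auto
        ultimately show "((1 - snd z) * cu (fst z) + snd z * fst z, (1 - snd z) * cs (fst z)) \<in> {0..1} \<times> {0..1}"
          using zz by simp
      qed
    qed
    have fb: "f (s,0) = P (cu s, cs s)" for s by (simp add: f_def)
    have fJ: "f z = x0" if "z \<in> square_J" for z
    proof -
      obtain s t where zz: "z = (s,t)" by (cases z)
      then have st: "s \<in> {0..1}" "t \<in> {0..1}" "s = 0 \<or> s = 1 \<or> t = 1" using that by (auto simp: square_J_def)
      consider "s = 0" | "s = 1" | "t = 1" using st by blast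
      then show ?thesis
      proof cases
        case 1 then show ?thesis using zz P(4)[of 0] by (simp add: f_def c_ends)
      next
        case 2 then show ?thesis using zz P(4)[of 1] by (simp add: f_def c_ends)
      next
        case 3 then show ?thesis using zz P(4)[of s] st by (simp add: f_def)
      qed
    qed
    have fbK: "f (s,0) \<in> K" if s: "s \<in> {0..1}" for s
    proof -
      have s01: "0 \<le> s" "s \<le> 1" using s by auto
      consider "s \<le> 1/3" | "1/3 \<le> s \<and> s \<le> 2/3" | "2/3 \<le> s" by linarith
      then show ?thesis
      proof cases
        case 1
        then have "cu s = 0 \<and> cs s = 3 * s" using c1 s01 by blast
        moreover have "3 * s \<in> {0..1}" using 1 s01 by auto
        ultimately show ?thesis using fb pK P(2) by simp
      next
        case 2
        then have "cu s = 3 * s - 1 \<and> cs s = 1" using c2 by blast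
        moreover have "3 * s - 1 \<in> {0..1}" using 2 by auto
        ultimately show ?thesis using fb P(4) x0K by simp
      next
        case 3
        then have "cu s = 1 \<and> cs s = 3 - 3 * s" using c3 s01 by blast
        moreover have "3 - 3 * s \<in> {0..1}" using 3 s01 by auto
        ultimately show ?thesis using fb qK P(3) by simp
      qed
    qed
    have rf: "rel_2disc L K x0 f"
      unfolding rel_2disc_def
    proof (intro conjI ballI cf)
      show "f ` square_bd \<subseteq> K"
      proof (rule image_subsetI)
        fix z assume z: "z \<in> square_bd"
        obtain s t where zz: "z = (s,t)" by (cases z)
        then have st: "s \<in> {0..1}" "t \<in> {0..1}" "s = 0 \<or> s = 1 \<or> t = 0 \<or> t = 1" using z by (auto simp: square_bd_def)
        show "f z \<in> K"
        proof (cases "t = 0")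
          case True then show ?thesis using zz fbK st by simp
        next
          case False
          then have "z \<in> square_J" using zz st by (auto simp: square_J_def)
          then show ?thesis using fJ x0K by simp
        qed
      qed
      show "\<And>z. z \<in> square_J \<Longrightarrow> f z = x0" by (rule fJ)
    qed
    obtain g where rg: "rel_2disc (subtopology L Kp) K x0 g" and hgf: "homotopic_with (Prel K x0) square L g f"
      using S rf unfolding rel_pi2_incl_surjective_def Prel_eq by blast
    obtain F where F: "continuous_map (prod_topology (top_of_set {0..1::real}) square) L F"
      "\<And>x. F (0,x) = g x" "\<And>x. F (1,x) = f x" "\<And>u. u \<in> {0..1} \<Longrightarrow> Prel K x0 (\<lambda>x. F (u,x))"
      using hgf unfolding homotopic_with_def by auto
    have cF: "continuous_map (top_of_set ({0..1} \<times> ({0..1} \<times> {0..1}))) L F" using F(1) htpy_sq by simp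
    have FK: "F (u,(s,0)) \<in> K" if "u \<in> {0..1}" "s \<in> {0..1}" for u s
    proof -
      have "(s,0) \<in> square_bd" using that by (auto simp: square_bd_def)
      then show ?thesis using F(4)[OF that(1)] by (auto simp: Prel_def)
    qed
    have FJ: "F (u,z) = x0" if "u \<in> {0..1}" "z \<in> square_J" for u z
      using F(4)[OF that(1)] that(2) by (auto simp: Prel_def)
    have cgK: "continuous_map square (subtopology L Kp) g" and gJ: "\<And>z. z \<in> square_J \<Longrightarrow> g z = x0"
      using rg by (auto simp: rel_2disc_def)
    have cg: "continuous_map square L g" using cgK by (simp add: cont_sub_iff)
    define E where "E z = F (snd z, (fst z, 0))" for z :: "real \<times> real"
    have cE: "continuous_map square L E"
      unfolding E_def square_def by (rule cm_comp[OF _ _ cF]) (auto intro!: continuous_intros)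
    have cEKp: "continuous_map square (subtopology L Kp) E"
      using cE FK KKp by (auto simp: cont_sub_iff sq_top E_def)
    have E0: "E (s,0) = g (s,0)" if "s \<in> {0..1}" for s by (simp add: E_def F(2))
    have EK: "E (s,t) \<in> K" if "s \<in> {0..1}" "t \<in> {0..1}" for s t using FK that by (simp add: E_def)
    have Es: "E (0,t) = x0 \<and> E (1,t) = x0" if "t \<in> {0..1}" for t
    proof -
      have "(0::real,0::real) \<in> square_J" "(1::real,0::real) \<in> square_J" by (auto simp: square_J_def)
      then show ?thesis using FJ that by (simp add: E_def)
    qed
    have hm: "homotopic_with (Prel K x0) square L g (vglue g E)"
      by (rule glue_homotopic[OF cg cE E0 gJ EK Es x0K])
    define m where "m = vglue g E"
    have cmKp: "continuous_map square (subtopology L Kp) m"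
      unfolding m_def by (rule vglue_cont[OF cgK cEKp E0])
    have Pm: "Prel K x0 m" using homotopic_with_imp_property[OF hm] by (simp add: m_def)
    have mJ: "m z = x0" if "z \<in> square_J" for z using Pm that by (simp add: Prel_def)
    have m0: "m (s,0) = f (s,0)" for s by (simp add: m_def vglue_def E_def F(3))
    define Q where "Q w = m ((1 - snd w) * cu (fst w) + snd w * ((1 + fst w) / 3), (1 - snd w) * cs (fst w))"
      for w :: "real \<times> real"
    show "homotopic_with (\<lambda>h. h 0 = x0 \<and> h 1 = x0) unit_interval (subtopology L Kp) p q"
      unfolding unit_interval_def
    proof (rule hw_intro[where h=Q])
      show "continuous_map (top_of_set ({0..1} \<times> {0..1})) (subtopology L Kp) Q"
        unfolding Q_def
      proof (rule cm_comp[OF _ _ cmKp[unfolded square_def]])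
        show "continuous_on ({0..1::real} \<times> {0..1::real})
            (\<lambda>w. ((1 - snd w) * cu (fst w) + snd w * ((1 + fst w) / 3), (1 - snd w) * cs (fst w)))"
          by (intro continuous_intros cu_cont cs_cont) auto
        show "(\<lambda>w. ((1 - snd w) * cu (fst w) + snd w * ((1 + fst w) / 3), (1 - snd w) * cs (fst w))) `
            ({0..1} \<times> {0..1}) \<subseteq> {0..1} \<times> {0..1}"
        proof (rule image_subsetI)
          fix w :: "real \<times> real" assume w: "w \<in> {0..1} \<times> {0..1}"
          obtain u t where ww: "w = (u,t)" by (cases w)
          have st: "0 \<le> u" "u \<le> 1" "0 \<le> t" "t \<le> 1" using w ww by auto
          have r: "cu u \<in> {0..1}" "cs u \<in> {0..1}" using crange[OF st(1,2)] by auto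
          have "0 \<le> (1 - t) * cu u + t * ((1 + u) / 3) \<and> (1 - t) * cu u + t * ((1 + u) / 3) \<le> 1"
            using conv01[of "cu u" "(1 + u) / 3" t] r st by auto
          moreover have "0 \<le> (1 - t) * cs u + t * 0 \<and> (1 - t) * cs u + t * 0 \<le> 1"
            using conv01[of "cs u" 0 t] r st by auto
          ultimately show "((1 - snd w) * cu (fst w) + snd w * ((1 + fst w) / 3), (1 - snd w) * cs (fst w)) \<in> {0..1} \<times> {0..1}"
            using ww by simp
        qed
      qed
      show "Q (0, x) = p x" if "x \<in> {0..1}" for x
      proof -
        have x: "0 \<le> x" "x \<le> 1" using that by auto
        have "Q (0, x) = m (x / 3, 0)" by (simp add: Q_def c_ends)
        also have "\<dots> = P (cu (x/3), cs (x/3))" by (simp add: m0 fb)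
        also have "\<dots> = P (0, x)" using c1[of "x/3"] x by simp
        finally show ?thesis using P(2) by simp
      qed
      show "Q (1, x) = q x" if "x \<in> {0..1}" for x
      proof -
        have x: "0 \<le> x" "x \<le> 1" using that by auto
        have e: "(1 - x) * 1 + x * ((1 + 1) / 3) = 1 - x / 3" by (simp add: algebra_simps)
        have "Q (1, x) = m ((1 - x) * 1 + x * ((1 + 1) / 3), 0)" by (simp add: Q_def c_ends)
        also have "\<dots> = m (1 - x / 3, 0)" by (simp only: e)
        also have "\<dots> = P (cu (1 - x/3), cs (1 - x/3))" by (simp add: m0 fb)
        also have "\<dots> = P (1, x)" using c3[of "1 - x/3"] x by simp
        finally show ?thesis using P(3) by simp
      qed
      show "\<And>h k. (\<And>x. x \<in> {0..1::real} \<Longrightarrow> h x = k x) \<Longrightarrow> (h 0 = x0 \<and> h 1 = x0) = (k 0 = x0 \<and> k 1 = x0)"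
        by (rule Ploop_local)
      fix u :: real assume u: "u \<in> {0..1}"
      have u01: "0 \<le> u" "u \<le> 1" using u by auto
      have "Q (u, 0) = m (cu u, cs u)" by (simp add: Q_def)
      also have "\<dots> = x0" using mJ cJ[OF u01] by simp
      finally have A: "Q (u, 0) = x0" .
      have "Q (u, 1) = m ((1 + u) / 3, 0)" by (simp add: Q_def)
      also have "\<dots> = P (cu ((1 + u) / 3), cs ((1 + u) / 3))" by (simp add: m0 fb)
      also have "\<dots> = P (u, 1)"
      proof -
        have e: "3 * ((1 + u) / 3) - 1 = u" by (simp add: field_simps)
        have "cu ((1 + u) / 3) = 3 * ((1 + u) / 3) - 1 \<and> cs ((1 + u) / 3) = 1" by (rule c2) (use u01 in auto)
        then show ?thesis unfolding e by simp
      qed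
      also have "\<dots> = x0" using P(4)[OF u] by simp
      finally have B: "Q (u, 1) = x0" .
      show "Q (u, 0) = x0 \<and> Q (u, 1) = x0" using A B by simp
    qed
  qed
qed

theorem lemma3p1:
  fixes L :: "'a topology" and K Kp :: "'a set" and x0 :: 'a
  assumes "K \<subseteq> Kp" and "Kp \<subseteq> topspace L"
    and "cw_complex (subtopology L K)" and "cw_complex (subtopology L Kp)" and "cw_complex L"
    and "attached_cells 1 (subtopology L Kp) K"
    and "attached_cells 2 L Kp"
    and "x0 \<in> K"
  shows "rel_pi2_incl_surjective L Kp K x0 \<longleftrightarrow>
           (pi1_incl_injective L K x0 \<and> pi2_incl_surjective L Kp x0)"
proof
  assume S: "rel_pi2_incl_surjective L Kp K x0"
  have a: "pi1_incl_injective L K x0" by (rule dir_a[OF assms(3) assms(6) assms(1) assms(2) assms(8) S])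
  have b: "pi2_incl_surjective L Kp x0" by (rule dir_b[OF assms(1) assms(2) assms(8) S])
  show "pi1_incl_injective L K x0 \<and> pi2_incl_surjective L Kp x0" using a b by (rule conjI)
next
  assume ab: "pi1_incl_injective L K x0 \<and> pi2_incl_surjective L Kp x0"
  show "rel_pi2_incl_surjective L Kp K x0"
    by (rule dir_back[OF assms(1) assms(2) assms(8) conjunct1[OF ab] conjunct2[OF ab]])
qed

end
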